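(* Let $r\ge2$ be an integer and $n\in\mathbb N$. There is a constant $c_1>0$ depending only on $r$ such that the following holds. Let $g\in\mathbb W^{r-1}$ and suppose that for some fixed $j\in\mathbb Z$, for each $\nu=j,j+1,\dots,j+2(r-2)$ there is a point $t_\nu\in I_\nu$ with $|g(t_\nu)|\le h^{r-1}$. Then $|g(x)|\le c_1h^{r-1}$ for every $x\in\bigcup_{\nu=j}^{j+2(r-2)}I_\nu$.
   Context: $\mathbb W^{m}$ ($m\in\mathbb N$) is the class of $2\pi$-periodic functions whose derivative of order $m-1$ exists and is absolutely continuous and whose $m$-th derivative satisfies $|g^{(m)}|\le1$ a.e. on $\mathbb R$. For fixed $n$: $x_j:=-j\pi/n$ ($j\in\mathbb Z$), $I_j:=[x_j,x_{j-1}]$, $h:=\pi/n$. *)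

theory Defs
  imports "HOL-Analysis.Analysis"
begin

definition abs_cont_on :: "real \<Rightarrow> real \<Rightarrow> (real \<Rightarrow> real) \<Rightarrow> bool" where
  "abs_cont_on a b f \<longleftrightarrow>
     (\<forall>\<epsilon>>0. \<exists>\<delta>>0. \<forall>(N::nat) (u::nat \<Rightarrow> real) (v::nat \<Rightarrow> real).
        (\<forall>i<N. a \<le> u i \<and> u i \<le> v i \<and> v i \<le> b) \<and>
        (\<forall>i<N. \<forall>k<N. i \<noteq> k \<longrightarrow> v i \<le> u k \<or> v k \<le> u i) \<and>
        (\<Sum>i<N. v i - u i) < \<delta>
        \<longrightarrow> (\<Sum>i<N. \<bar>f (v i) - f (u i)\<bar>) < \<epsilon>)"

definition classW :: "nat \<Rightarrow> (real \<Rightarrow> real) \<Rightarrow> bool" where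
  "classW m g \<longleftrightarrow>
     (\<forall>x. g (x + 2 * pi) = g x) \<and>
     (\<exists>D :: nat \<Rightarrow> real \<Rightarrow> real.
        D 0 = g \<and>
        (\<forall>k < m - 1. \<forall>x. (D k has_real_derivative D (Suc k) x) (at x)) \<and>
        (\<forall>a b. abs_cont_on a b (D (m - 1))) \<and>
        (AE x in lborel. (D (m - 1) has_real_derivative D m x) (at x) \<and> \<bar>D m x\<bar> \<le> 1))"

definition gridpt :: "nat \<Rightarrow> int \<Rightarrow> real" where
  "gridpt n j = - (real_of_int j * pi / real n)"

definition gridI :: "nat \<Rightarrow> int \<Rightarrow> real set" where
  "gridI n j = {gridpt n j .. gridpt n (j - 1)}"

end

theory Submission
  imports Defs "HOL-Computational_Algebra.Polynomial"
begin


lemma rolle_step: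
  fixes \<phi> \<phi>' :: "real \<Rightarrow> real"
  assumes der: "\<And>x. (\<phi> has_real_derivative \<phi>' x) (at x)"
  shows "finite Z \<Longrightarrow> card Z = Suc m \<Longrightarrow> (\<forall>z\<in>Z. \<phi> z = 0) \<Longrightarrow>
    \<exists>Z'. finite Z' \<and> card Z' = m \<and> (\<forall>w\<in>Z'. \<phi>' w = 0) \<and> (\<forall>w\<in>Z'. w < Max Z)"
proof (induction m arbitrary: Z)
  case 0
  then show ?case by (intro exI[of _ "{}"]) auto
next
  case (Suc m)
  define z where "z = Max Z"
  define Z0 where "Z0 = Z - {z}"
  have ne: "Z \<noteq> {}" using Suc.prems by auto
  have zZ: "z \<in> Z" using Max_in[OF Suc.prems(1) ne] z_def by auto
  have cZ0: "card Z0 = Suc m" using Suc.prems zZ by (simp add: Z0_def)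
  have fZ0: "finite Z0" using Suc.prems by (simp add: Z0_def)
  obtain Z0' where Z0': "finite Z0'" "card Z0' = m" "\<forall>w\<in>Z0'. \<phi>' w = 0" "\<forall>w\<in>Z0'. w < Max Z0"
    using Suc.IH[OF fZ0 cZ0] Suc.prems(3) Z0_def by auto
  define z0 where "z0 = Max Z0"
  have Z0ne: "Z0 \<noteq> {}" using cZ0 by auto
  have z0Z0: "z0 \<in> Z0" using Max_in[OF fZ0 Z0ne] z0_def by auto
  have "z0 \<le> z" using z0Z0 Suc.prems(1) z_def Z0_def by auto
  moreover have "z0 \<noteq> z" using z0Z0 Z0_def by auto
  ultimately have lt: "z0 < z" by auto
  have "\<exists>w. z0 < w \<and> w < z \<and> DERIV \<phi> w :> 0"
  proof (rule Rolle[OF lt])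
    show "\<phi> z0 = \<phi> z" using Suc.prems(3) zZ z0Z0 Z0_def by auto
    show "continuous_on {z0..z} \<phi>"
      using der by (meson DERIV_isCont continuous_at_imp_continuous_on)
    show "\<And>x. z0 < x \<Longrightarrow> x < z \<Longrightarrow> \<phi> differentiable (at x)"
      using der real_differentiable_def by blast
  qed
  then obtain w where w: "z0 < w" "w < z" "DERIV \<phi> w :> 0" by blast
  have "\<phi>' w = 0" using DERIV_unique[OF der w(3)] .
  moreover have "w \<notin> Z0'" using Z0'(4) w(1) z0_def by force
  ultimately show ?case using Z0' w z0_def z_def
    by (intro exI[of _ "insert w Z0'"]) auto
qed

lemma degree_pderiv_pow: "degree ((pderiv ^^ l) (p::real poly)) = degree p - l"
  by (induction l arbitrary: p) (simp_all add: funpow_Suc_right degree_pderiv)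

lemma coeff_pderiv_pow: "\<exists>c::nat. c \<ge> 1 \<and> coeff ((pderiv ^^ l) (p::real poly)) n = real c * coeff p (n + l)"
proof (induction l arbitrary: p n)
  case 0
  then show ?case by (intro exI[of _ 1]) auto
next
  case (Suc l)
  obtain c where c: "c \<ge> 1" "coeff ((pderiv ^^ l) (pderiv p)) n = real c * coeff (pderiv p) (n + l)"
    using Suc.IH by blast
  have e: "(pderiv ^^ Suc l) p = (pderiv ^^ l) (pderiv p)" by (simp only: funpow_Suc_right o_apply)
  show ?case
    by (intro exI[of _ "c * Suc (n + l)"]) (use c in \<open>simp only: e, simp add: coeff_pderiv algebra_simps\<close>)
qed

lemma poly_deg1: "degree (q::real poly) \<le> 1 \<Longrightarrow> poly q y = coeff q 0 + coeff q 1 * y"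
proof -
  assume "degree q \<le> 1"
  then have "degree q = 0 \<or> degree q = 1" by auto
  then show ?thesis
  proof
    assume d: "degree q = 0"
    then have "coeff q 1 = 0" by (simp add: coeff_eq_0)
    then show ?thesis using d by (simp add: poly_altdef)
  next
    assume "degree q = 1"
    then show ?thesis by (simp add: poly_altdef)
  qed
qed

lemma interp:
  fixes D :: "nat \<Rightarrow> real \<Rightarrow> real" and s :: "nat \<Rightarrow> real" and k :: nat
  assumes deriv: "\<forall>l<k. \<forall>x. (D l has_real_derivative D (Suc l) x) (at x)"
    and lip: "\<forall>x y. \<bar>D k x - D k y\<bar> \<le> \<bar>x - y\<bar>"
    and hpos: "h > 0"
    and sep: "\<forall>i\<le>k. \<forall>i'\<le>k. i \<noteq> i' \<longrightarrow> h \<le> \<bar>s i - s i'\<bar>"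
    and near: "\<forall>i\<le>k. \<bar>x - s i\<bar> \<le> L"
    and vals: "\<forall>i\<le>k. \<bar>D 0 (s i)\<bar> \<le> M"
  shows "\<bar>D 0 x\<bar> \<le> M + real (k+1) * M * (L/h)^k + L^(k+1)"
proof -
  define I where "I = {..k}"
  have fI: "finite I" by (simp add: I_def)
  have cI: "card I = k + 1" by (simp add: I_def)
  have cIi: "i \<in> I \<Longrightarrow> card (I - {i}) = k" for i using cI fI by simp
  have M0: "0 \<le> M" using vals by force
  have L0: "0 \<le> L" using near by force
  define ell where "ell i = (\<Prod>j\<in>I-{i}. [:-s j, 1:])" for i
  define den where "den i = (\<Prod>j\<in>I-{i}. s i - s j)" for i
  define P where "P = (\<Sum>i\<in>I. smult (D 0 (s i) / den i) (ell i))"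
  define \<omega> where "\<omega> = (\<Prod>j\<in>I. [:-s j, 1:])"
  have poly_ell: "poly (ell i) y = (\<Prod>j\<in>I-{i}. y - s j)" for i y by (simp add: ell_def poly_prod)
  have poly_\<omega>: "poly \<omega> y = (\<Prod>j\<in>I. y - s j)" for y by (simp add: \<omega>_def poly_prod)
  have sepI: "i \<in> I \<Longrightarrow> j \<in> I \<Longrightarrow> i \<noteq> j \<Longrightarrow> h \<le> \<bar>s i - s j\<bar>" for i j
    using sep I_def by auto
  have sne: "i \<in> I \<Longrightarrow> j \<in> I \<Longrightarrow> i \<noteq> j \<Longrightarrow> s i \<noteq> s j" for i j
    using sepI[of i j] hpos by force
  have den_nz: "i \<in> I \<Longrightarrow> den i \<noteq> 0" for i
    unfolding den_def using fI sne by (auto simp: prod_zero_iff)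
  have ell_zero: "i \<in> I \<Longrightarrow> m \<in> I \<Longrightarrow> m \<noteq> i \<Longrightarrow> poly (ell i) (s m) = 0" for i m
    unfolding poly_ell using fI by (auto simp: prod_zero_iff intro!: bexI[of _ m])
  have P_nodes: "poly P (s m) = D 0 (s m)" if m: "m \<in> I" for m
  proof -
    have "poly P (s m) = (\<Sum>i\<in>I. D 0 (s i) / den i * poly (ell i) (s m))"
      by (simp add: P_def poly_sum)
    also have "\<dots> = D 0 (s m) / den m * poly (ell m) (s m) + (\<Sum>i\<in>I-{m}. D 0 (s i) / den i * poly (ell i) (s m))"
      using fI m by (simp add: sum.remove)
    also have "(\<Sum>i\<in>I-{m}. D 0 (s i) / den i * poly (ell i) (s m)) = 0"
      using ell_zero m by (intro sum.neutral) auto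
    also have "poly (ell m) (s m) = den m" by (simp add: poly_ell den_def)
    finally show ?thesis using den_nz[OF m] by simp
  qed
  have deg_ell: "i \<in> I \<Longrightarrow> degree (ell i) \<le> k" for i
  proof -
    assume i: "i \<in> I"
    have "degree (ell i) \<le> sum (degree \<circ> (\<lambda>j. [:-s j, 1:])) (I - {i})"
      unfolding ell_def by (rule degree_prod_sum_le) (use fI in auto)
    also have "\<dots> = k" using cIi[OF i] by simp
    finally show ?thesis .
  qed
  have deg_P: "degree P \<le> k"
    unfolding P_def by (rule degree_sum_le) (use fI deg_ell degree_smult_le order_trans in blast)+
  have term_bound: "\<bar>D 0 (s i) / den i * poly (ell i) x\<bar> \<le> M * (L/h)^k" if i: "i \<in> I" for i
  proof -
    have p1: "\<bar>poly (ell i) x\<bar> \<le> L^k"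
    proof -
      have "\<bar>poly (ell i) x\<bar> = (\<Prod>j\<in>I-{i}. \<bar>x - s j\<bar>)" by (simp add: poly_ell abs_prod)
      also have "\<dots> \<le> (\<Prod>j\<in>I-{i}. L)" by (rule prod_mono) (use near I_def in auto)
      also have "\<dots> = L^k" using cIi[OF i] by simp
      finally show ?thesis .
    qed
    have p2: "h^k \<le> \<bar>den i\<bar>"
    proof -
      have "h^k = (\<Prod>j\<in>I-{i}. h)" using cIi[OF i] by simp
      also have "\<dots> \<le> (\<Prod>j\<in>I-{i}. \<bar>s i - s j\<bar>)" by (rule prod_mono) (use hpos sepI i in auto)
      also have "\<dots> = \<bar>den i\<bar>" by (simp add: den_def abs_prod)
      finally show ?thesis .
    qed
    have hk: "h^k > 0" using hpos by simp
    have "\<bar>D 0 (s i) / den i * poly (ell i) x\<bar> = \<bar>D 0 (s i)\<bar> * \<bar>poly (ell i) x\<bar> / \<bar>den i\<bar>"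
      by (simp add: abs_mult abs_divide)
    also have "\<dots> \<le> M * L^k / h^k"
    proof (rule frac_le)
      show "0 \<le> M * L^k" using M0 L0 by simp
      show "\<bar>D 0 (s i)\<bar> * \<bar>poly (ell i) x\<bar> \<le> M * L^k"
        by (rule mult_mono) (use vals i I_def p1 M0 in auto)
      show "0 < h^k" by (rule hk)
      show "h^k \<le> \<bar>den i\<bar>" by (rule p2)
    qed
    also have "\<dots> = M * (L/h)^k" by (simp add: power_divide)
    finally show ?thesis .
  qed
  have P_bound: "\<bar>poly P x\<bar> \<le> real (k+1) * M * (L/h)^k"
  proof -
    have "\<bar>poly P x\<bar> = \<bar>\<Sum>i\<in>I. D 0 (s i) / den i * poly (ell i) x\<bar>" by (simp add: P_def poly_sum)
    also have "\<dots> \<le> (\<Sum>i\<in>I. \<bar>D 0 (s i) / den i * poly (ell i) x\<bar>)" by (rule sum_abs)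
    also have "\<dots> \<le> (\<Sum>i\<in>I. M * (L/h)^k)" by (rule sum_mono) (rule term_bound)
    also have "\<dots> = real (k+1) * M * (L/h)^k" using cI by simp
    finally show ?thesis .
  qed
  have RHS0: "0 \<le> real (k+1) * M * (L/h)^k" "0 \<le> L^(k+1)" using M0 L0 hpos by auto
  show ?thesis
  proof (cases "x \<in> s ` I")
    case True
    then obtain m where "m \<in> I" "x = s m" by auto
    then have "\<bar>D 0 x\<bar> \<le> M" using vals I_def by auto
    then show ?thesis using RHS0 by linarith
  next
    case False
    have \<omega>x: "poly \<omega> x \<noteq> 0" using False fI by (auto simp: poly_\<omega> prod_zero_iff)
    define K where "K = (D 0 x - poly P x) / poly \<omega> x"
    define F where "F l y = D l y - poly ((pderiv^^l) P) y - K * poly ((pderiv^^l) \<omega>) y" for l y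
    have Fder: "(F l has_real_derivative F (Suc l) y) (at y)" if "l < k" for l y
    proof -
      have d1: "(D l has_real_derivative D (Suc l) y) (at y)" using deriv that by blast
      have "((\<lambda>y. D l y - poly ((pderiv^^l) P) y - K * poly ((pderiv^^l) \<omega>) y) has_real_derivative
          D (Suc l) y - poly (pderiv ((pderiv^^l) P)) y - K * poly (pderiv ((pderiv^^l) \<omega>)) y) (at y)"
        by (intro DERIV_diff DERIV_cmult d1 poly_DERIV)
      then show ?thesis unfolding F_def by simp
    qed
    have zeros: "l \<le> k \<Longrightarrow> \<exists>Z. finite Z \<and> card Z = Suc (Suc (k - l)) \<and> (\<forall>z\<in>Z. F l z = 0)" for l
    proof (induction l)
      case 0
      have inj: "inj_on s I" unfolding inj_on_def using sne by blast
      have "card (insert x (s ` I)) = Suc (Suc k)"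
        using False fI cI card_image[OF inj] by simp
      moreover have "\<forall>z\<in>insert x (s ` I). F 0 z = 0"
      proof
        fix z assume "z \<in> insert x (s ` I)"
        then show "F 0 z = 0"
        proof
          assume "z = x" then show ?thesis using \<omega>x by (simp add: F_def K_def)
        next
          assume "z \<in> s ` I"
          then obtain m where m: "m \<in> I" "z = s m" by auto
          have "poly \<omega> (s m) = 0" using m fI by (auto simp: poly_\<omega> prod_zero_iff)
          then show ?thesis using m P_nodes by (simp add: F_def)
        qed
      qed
      ultimately show ?case using fI by (intro exI[of _ "insert x (s ` I)"]) auto
    next
      case (Suc l)
      then obtain Z where Z: "finite Z" "card Z = Suc (Suc (k - l))" "\<forall>z\<in>Z. F l z = 0" by auto
      have kl: "Suc (k - l) = Suc (Suc (k - Suc l))" using Suc.prems by auto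
      obtain Z' where "finite Z'" "card Z' = Suc (k - l)" "\<forall>w\<in>Z'. F (Suc l) w = 0"
        using rolle_step[of "F l" "F (Suc l)", OF _ Z] Fder Suc.prems by auto
      then show ?case using kl by auto
    qed
    obtain Z where Z: "finite Z" "card Z = 2" "\<forall>z\<in>Z. F k z = 0" using zeros[of k] by auto
    then obtain a b where ab: "a \<noteq> b" "F k a = 0" "F k b = 0" by (auto simp: card_2_iff)
    define Q where "Q = (pderiv^^k) P"
    define W where "W = (pderiv^^k) \<omega>"
    have degQ: "degree Q = 0" using deg_P by (simp add: Q_def degree_pderiv_pow)
    have lin_nz: "[:-s j, 1:] \<noteq> 0" for j by simp
    have deg\<omega>: "degree \<omega> = k + 1"
      unfolding \<omega>_def by (subst degree_prod_eq_sum_degree) (use cI in auto)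
    have lc\<omega>: "coeff \<omega> (k+1) = 1"
      using lead_coeff_prod[of "\<lambda>j. [:-s j, 1:]" I] deg\<omega> by (simp add: \<omega>_def)
    have degW: "degree W = 1" using deg\<omega> by (simp add: W_def degree_pderiv_pow)
    obtain c :: nat where c: "c \<ge> 1" "coeff W 1 = real c * coeff \<omega> (1 + k)"
      using coeff_pderiv_pow[of k \<omega> 1] W_def by auto
    have cW: "coeff W 1 = real c" using c lc\<omega> by simp
    have Fk: "F k y = D k y - coeff Q 0 - K * (coeff W 0 + real c * y)" for y
      using poly_deg1[of Q y] poly_deg1[of W y] degQ degW cW
    proof -
      have pQ: "poly Q y = coeff Q 0" using poly_deg1[of Q y] degQ by (simp add: coeff_eq_0)
      have pW: "poly W y = coeff W 0 + real c * y" using poly_deg1[of W y] degW cW by simp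
      show ?thesis unfolding F_def Q_def[symmetric] W_def[symmetric] pQ pW by simp
    qed
    have "D k a - D k b = K * real c * (a - b)" using ab Fk[of a] Fk[of b] by (simp add: algebra_simps)
    moreover have "\<bar>D k a - D k b\<bar> \<le> \<bar>a - b\<bar>" using lip by blast
    ultimately have "\<bar>K\<bar> * real c * \<bar>a - b\<bar> \<le> \<bar>a - b\<bar>" by (simp add: abs_mult)
    then have "\<bar>K\<bar> * real c \<le> 1" using ab(1) by simp
    moreover have "\<bar>K\<bar> * 1 \<le> \<bar>K\<bar> * real c" by (rule mult_left_mono) (use c(1) in auto)
    ultimately have K1: "\<bar>K\<bar> \<le> 1" by linarith
    have err: "D 0 x - poly P x = K * poly \<omega> x" using \<omega>x by (simp add: K_def)
    have \<omega>b: "\<bar>poly \<omega> x\<bar> \<le> L^(k+1)"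
    proof -
      have "\<bar>poly \<omega> x\<bar> = (\<Prod>j\<in>I. \<bar>x - s j\<bar>)" by (simp add: poly_\<omega> abs_prod)
      also have "\<dots> \<le> (\<Prod>j\<in>I. L)" by (rule prod_mono) (use near I_def in auto)
      also have "\<dots> = L^(k+1)" using cI by simp
      finally show ?thesis .
    qed
    have "\<bar>K\<bar> * \<bar>poly \<omega> x\<bar> \<le> 1 * L^(k+1)" by (rule mult_mono) (use K1 \<omega>b in auto)
    then have "\<bar>D 0 x - poly P x\<bar> \<le> L^(k+1)" using err by (simp add: abs_mult)
    then show ?thesis using P_bound M0 by linarith
  qed
qed



lemma fam_length:
  fixes T :: "real set" and u v :: "nat \<Rightarrow> real"
  assumes T: "open T" "emeasure lebesgue T < ennreal \<delta>"
    and sub: "\<forall>i<n. u i \<le> v i \<and> {u i..v i} \<subseteq> T"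
    and no: "\<forall>i<n. \<forall>k<n. i \<noteq> k \<longrightarrow> v i \<le> u k \<or> v k \<le> u i"
  shows "(\<Sum>i<n. v i - u i) < \<delta>"
proof -
  have disj: "disjoint_family_on (\<lambda>i. {u i<..<v i}) {..<n}"
    unfolding disjoint_family_on_def
  proof (intro ballI impI)
    fix i k assume "i \<in> {..<n}" "k \<in> {..<n}" "i \<noteq> k"
    then have "v i \<le> u k \<or> v k \<le> u i" using no by auto
    then show "{u i<..<v i} \<inter> {u k<..<v k} = {}" by auto
  qed
  have "(\<Sum>i<n. emeasure lebesgue {u i<..<v i}) = emeasure lebesgue (\<Union>i<n. {u i<..<v i})"
    by (rule sum_emeasure) (use disj in auto)
  moreover have "(\<Sum>i<n. emeasure lebesgue {u i<..<v i}) = ennreal (\<Sum>i<n. v i - u i)"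
  proof -
    have "(\<Sum>i<n. emeasure lebesgue {u i<..<v i}) = (\<Sum>i<n. ennreal (v i - u i))"
      by (rule sum.cong) (use sub in auto)
    also have "\<dots> = ennreal (\<Sum>i<n. v i - u i)" by (rule sum_ennreal) (use sub in auto)
    finally show ?thesis .
  qed
  moreover have "emeasure lebesgue (\<Union>i<n. {u i<..<v i}) \<le> emeasure lebesgue T"
    by (rule emeasure_mono) (use sub T(1) in \<open>fastforce+\<close>)
  ultimately have "ennreal (\<Sum>i<n. v i - u i) < ennreal \<delta>" using T(2) by auto
  moreover have "0 \<le> (\<Sum>i<n. v i - u i)" using sub by (intro sum_nonneg) auto
  ultimately show ?thesis using ennreal_less_iff by blast
qed

lemma ac_lip_eps:
  fixes f f' :: "real \<Rightarrow> real"
  assumes ac: "abs_cont_on a b f"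
    and good: "\<And>x. x \<notin> N \<Longrightarrow> (f has_real_derivative f' x) (at x) \<and> f' x \<le> 1"
    and Nnull: "N \<in> null_sets lebesgue"
    and ab: "a \<le> b" and e: "e > 0"
  shows "f b - f a \<le> (1 + e) * (b - a) + e"
proof -
  obtain \<delta> where \<delta>: "\<delta> > 0" and \<delta>P: "\<forall>(M::nat) u v. (\<forall>i<M. a \<le> u i \<and> u i \<le> v i \<and> v i \<le> b) \<and>
        (\<forall>i<M. \<forall>k<M. i \<noteq> k \<longrightarrow> v i \<le> u k \<or> v k \<le> u i) \<and> (\<Sum>i<M. v i - u i) < \<delta>
        \<longrightarrow> (\<Sum>i<M. \<bar>f (v i) - f (u i)\<bar>) < e"
    using ac e unfolding abs_cont_on_def by blast
  have Nleb: "N \<in> sets lebesgue" using Nnull by auto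
  obtain T where T: "open T" "N \<subseteq> T" "T - N \<in> lmeasurable" "emeasure lebesgue (T - N) < ennreal \<delta>"
    using sets_lebesgue_outer_open[OF Nleb \<delta>] by blast
  have "emeasure lebesgue T = emeasure lebesgue ((T - N) \<union> N)" using T(2) by (simp add: Un_absorb2)
  also have "\<dots> = emeasure lebesgue (T - N)"
    by (rule emeasure_Un_null_set) (use T(3) Nnull in auto)
  finally have Tsmall: "emeasure lebesgue T < ennreal \<delta>" using T(4) by simp
  define fam where "fam x M u v \<longleftrightarrow> (\<forall>i<M. a \<le> u i \<and> u i \<le> v i \<and> v i \<le> x \<and> {u i..v i} \<subseteq> T) \<and>
        (\<forall>i<M. \<forall>k<M. i \<noteq> k \<longrightarrow> v i \<le> u k \<or> v k \<le> u i)" for x and M :: nat and u v :: "nat \<Rightarrow> real"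
  define S where "S x = {\<sigma>. \<exists>M u v. fam x M u v \<and> \<sigma> = (\<Sum>i<M. \<bar>f (v i) - f (u i)\<bar>)}" for x
  define G where "G x = Sup (S x)" for x
  have S_lt: "\<sigma> < e" if xb: "x \<le> b" and sS: "\<sigma> \<in> S x" for x \<sigma>
  proof -
    obtain M u v where F: "fam x M u v" "\<sigma> = (\<Sum>i<M. \<bar>f (v i) - f (u i)\<bar>)" using sS S_def by auto
    have "(\<Sum>i<M. v i - u i) < \<delta>"
      by (rule fam_length[OF T(1) Tsmall]) (use F(1) in \<open>auto simp: fam_def\<close>)
    moreover have "\<forall>i<M. a \<le> u i \<and> u i \<le> v i \<and> v i \<le> b"
      using F(1) xb unfolding fam_def by (meson order_trans)
    moreover have "\<forall>i<M. \<forall>k<M. i \<noteq> k \<longrightarrow> v i \<le> u k \<or> v k \<le> u i"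
      using F(1) unfolding fam_def by blast
    ultimately have "(\<Sum>i<M. \<bar>f (v i) - f (u i)\<bar>) < e" using \<delta>P by blast
    then show ?thesis using F(2) by simp
  qed
  have S0: "0 \<in> S x" for x unfolding S_def fam_def by (intro CollectI exI[of _ 0]) auto
  have S_ne: "S x \<noteq> {}" for x using S0 by blast
  have S_bdd: "bdd_above (S x)" if "x \<le> b" for x
    unfolding bdd_above_def using S_lt[OF that] less_imp_le by blast
  have S_mono: "S x \<subseteq> S y" if "x \<le> y" for x y
  proof
    fix \<sigma> assume "\<sigma> \<in> S x"
    then obtain M u v where F: "fam x M u v" "\<sigma> = (\<Sum>i<M. \<bar>f (v i) - f (u i)\<bar>)" using S_def by auto
    have "fam y M u v" using F(1) that unfolding fam_def by auto
    then show "\<sigma> \<in> S y" using F(2) unfolding S_def by blast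
  qed
  have G0: "0 \<le> G x" if "x \<le> b" for x unfolding G_def by (rule cSup_upper[OF S0 S_bdd[OF that]])
  have Ge: "G x \<le> e" if "x \<le> b" for x unfolding G_def
    by (rule cSup_least[OF S_ne]) (use S_lt[OF that] in \<open>auto intro: less_imp_le\<close>)
  have G_mono: "G x \<le> G y" if "x \<le> y" "y \<le> b" for x y
    unfolding G_def by (rule cSup_subset_mono[OF S_ne S_bdd[OF that(2)] S_mono[OF that(1)]])
  have G_ext: "G s + \<bar>f y - f s\<bar> \<le> G y" if th: "a \<le> s" "s \<le> y" "y \<le> b" "{s..y} \<subseteq> T" for s y
  proof -
    have "G s \<le> G y - \<bar>f y - f s\<bar>" unfolding G_def[of s]
    proof (rule cSup_least[OF S_ne])
      fix \<sigma> assume "\<sigma> \<in> S s"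
      then obtain M u v where F: "fam s M u v" "\<sigma> = (\<Sum>i<M. \<bar>f (v i) - f (u i)\<bar>)" using S_def by auto
      define u' where "u' = u(M := s)"
      define v' where "v' = v(M := y)"
      have F1: "\<forall>i<M. a \<le> u i \<and> u i \<le> v i \<and> v i \<le> s \<and> {u i..v i} \<subseteq> T"
        and F2: "\<forall>i<M. \<forall>k<M. i \<noteq> k \<longrightarrow> v i \<le> u k \<or> v k \<le> u i"
        using F(1) unfolding fam_def by blast+
      have c1: "\<forall>i<Suc M. a \<le> u' i \<and> u' i \<le> v' i \<and> v' i \<le> y \<and> {u' i..v' i} \<subseteq> T"
      proof (intro allI impI)
        fix i assume "i < Suc M"
        then consider "i < M" | "i = M" by linarith
        then show "a \<le> u' i \<and> u' i \<le> v' i \<and> v' i \<le> y \<and> {u' i..v' i} \<subseteq> T"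
        proof cases
          case 1 then show ?thesis using F1 th by (auto simp: u'_def v'_def)
        next
          case 2 then show ?thesis using th by (simp add: u'_def v'_def)
        qed
      qed
      have c2: "\<forall>i<Suc M. \<forall>k<Suc M. i \<noteq> k \<longrightarrow> v' i \<le> u' k \<or> v' k \<le> u' i"
      proof (intro allI impI)
        fix i k assume ik: "i < Suc M" "k < Suc M" "i \<noteq> k"
        show "v' i \<le> u' k \<or> v' k \<le> u' i"
        proof (cases "i = M")
          case True
          then have "k < M" using ik by auto
          then show ?thesis using True F1 by (simp add: u'_def v'_def)
        next
          case False
          then have iM: "i < M" using ik by auto
          show ?thesis
          proof (cases "k = M")
            case True
            then show ?thesis using iM F1 by (simp add: u'_def v'_def)
          next
            case False
            then have "k < M" using ik by auto
            then show ?thesis using iM F2 ik(3) \<open>i \<noteq> M\<close> False by (simp add: u'_def v'_def)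
          qed
        qed
      qed
      have "fam y (Suc M) u' v'" unfolding fam_def using c1 c2 by blast
      moreover have "(\<Sum>i<Suc M. \<bar>f (v' i) - f (u' i)\<bar>) = \<sigma> + \<bar>f y - f s\<bar>"
        using F(2) by (simp add: u'_def v'_def)
      ultimately have "\<sigma> + \<bar>f y - f s\<bar> \<in> S y" unfolding S_def by force
      then have "\<sigma> + \<bar>f y - f s\<bar> \<le> G y" unfolding G_def by (rule cSup_upper[OF _ S_bdd[OF th(3)]])
      then show "\<sigma> \<le> G y - \<bar>f y - f s\<bar>" by simp
    qed
    then show ?thesis by simp
  qed
  have cont: "\<exists>d>0. \<forall>y s. a \<le> y \<and> y \<le> s \<and> s \<le> b \<and> s - y < d \<longrightarrow> \<bar>f s - f y\<bar> < \<theta>" if th0: "\<theta> > 0" for \<theta>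
  proof -
    obtain d where d: "d > 0" and dP: "\<forall>(M::nat) u v. (\<forall>i<M. a \<le> u i \<and> u i \<le> v i \<and> v i \<le> b) \<and>
        (\<forall>i<M. \<forall>k<M. i \<noteq> k \<longrightarrow> v i \<le> u k \<or> v k \<le> u i) \<and> (\<Sum>i<M. v i - u i) < d
        \<longrightarrow> (\<Sum>i<M. \<bar>f (v i) - f (u i)\<bar>) < \<theta>"
      using ac th0 unfolding abs_cont_on_def by blast
    show ?thesis
    proof (intro exI[of _ d] conjI allI impI d)
      fix y s assume "a \<le> y \<and> y \<le> s \<and> s \<le> b \<and> s - y < d"
      then show "\<bar>f s - f y\<bar> < \<theta>" using dP[rule_format, of 1 "\<lambda>_. y" "\<lambda>_. s"] by auto
    qed
  qed
  define P where "P x \<longleftrightarrow> f x - f a \<le> (1 + e) * (x - a) + G x" for x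
  define A where "A = {x. a \<le> x \<and> x \<le> b \<and> (\<forall>y. a \<le> y \<and> y \<le> x \<longrightarrow> P y)}"
  have Pa: "P a" unfolding P_def using G0[OF ab] by simp
  have aA: "a \<in> A" unfolding A_def using Pa ab by (auto dest: antisym)
  have bddA: "bdd_above A" unfolding A_def bdd_above_def by auto
  define \<sigma> where "\<sigma> = Sup A"
  have \<sigma>1: "a \<le> \<sigma>" unfolding \<sigma>_def by (rule cSup_upper[OF aA bddA])
  have \<sigma>2: "\<sigma> \<le> b" unfolding \<sigma>_def by (rule cSup_least) (use aA A_def in auto)
  have below: "P y" if ay: "a \<le> y" "y < \<sigma>" for y
  proof -
    obtain x where "x \<in> A" "y < x" using less_cSupD[of A y] aA ay(2) \<sigma>_def by blast
    then show ?thesis using ay(1) A_def by auto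
  qed
  have P\<sigma>: "P \<sigma>"
  proof (rule ccontr)
    assume nP: "\<not> P \<sigma>"
    then have "\<sigma> \<noteq> a" using Pa by auto
    then have a\<sigma>: "a < \<sigma>" using \<sigma>1 by auto
    define gap where "gap = f \<sigma> - f a - ((1 + e) * (\<sigma> - a) + G \<sigma>)"
    have gap: "gap > 0" using nP unfolding P_def gap_def by auto
    obtain d where d: "d > 0" "\<forall>y s. a \<le> y \<and> y \<le> s \<and> s \<le> b \<and> s - y < d \<longrightarrow> \<bar>f s - f y\<bar> < gap / 2"
      using cont[of "gap/2"] gap by auto
    define y where "y = max a (\<sigma> - d/2)"
    have y: "a \<le> y" "y < \<sigma>" "\<sigma> - y < d" using a\<sigma> d(1) unfolding y_def by auto
    have "\<bar>f \<sigma> - f y\<bar> < gap / 2" using d(2) y \<sigma>2 by auto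
    then have "f \<sigma> - f y < gap / 2" by (meson abs_less_iff)
    moreover have "P y" using below y by auto
    moreover have "G y \<le> G \<sigma>" using G_mono y \<sigma>2 by auto
    moreover have "(1 + e) * (y - a) \<le> (1 + e) * (\<sigma> - a)" using y e by (intro mult_left_mono) auto
    ultimately show False using gap unfolding P_def gap_def by argo
  qed
  have "\<forall>y. a \<le> y \<and> y \<le> \<sigma> \<longrightarrow> P y"
  proof (intro allI impI)
    fix y assume y: "a \<le> y \<and> y \<le> \<sigma>"
    show "P y"
    proof (cases "y < \<sigma>")
      case True then show ?thesis using below y by auto
    next
      case False then have "y = \<sigma>" using y by auto
      then show ?thesis using P\<sigma> by simp
    qed
  qed
  then have \<sigma>A: "\<sigma> \<in> A" unfolding A_def using \<sigma>1 \<sigma>2 by blast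
  have \<sigma>b: "\<sigma> = b"
  proof (rule ccontr)
    assume "\<sigma> \<noteq> b"
    then have \<sigma>lt: "\<sigma> < b" using \<sigma>2 by auto
    have step: "\<exists>\<eta>>0. \<forall>y. \<sigma> < y \<and> y \<le> b \<and> y < \<sigma> + \<eta> \<longrightarrow> P y"
    proof (cases "\<sigma> \<in> T")
      case True
      then obtain \<eta> where \<eta>: "\<eta> > 0" "ball \<sigma> \<eta> \<subseteq> T" using T(1) open_contains_ball by blast
      show ?thesis
      proof (intro exI[of _ \<eta>] conjI allI impI \<eta>(1))
        fix y assume y: "\<sigma> < y \<and> y \<le> b \<and> y < \<sigma> + \<eta>"
        have "{\<sigma>..y} \<subseteq> T" using \<eta>(2) y by (auto simp: dist_real_def subset_iff)
        then have "G \<sigma> + \<bar>f y - f \<sigma>\<bar> \<le> G y" using G_ext \<sigma>1 y by auto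
        moreover have "(1 + e) * (\<sigma> - a) \<le> (1 + e) * (y - a)" using y e by (intro mult_left_mono) auto
        ultimately show "P y" using P\<sigma> unfolding P_def by linarith
      qed
    next
      case False
      then have "\<sigma> \<notin> N" using T(2) by auto
      then have gd: "(f has_real_derivative f' \<sigma>) (at \<sigma>)" "f' \<sigma> \<le> 1" using good by auto
      then have "((\<lambda>y. (f y - f \<sigma>) / (y - \<sigma>)) \<longlongrightarrow> f' \<sigma>) (at \<sigma>)"
        using has_field_derivative_iff by blast
      then have "\<forall>\<^sub>F y in at \<sigma>. dist ((f y - f \<sigma>) / (y - \<sigma>)) (f' \<sigma>) < e" using e by (rule tendstoD)
      then obtain \<eta> where \<eta>: "\<eta> > 0" "\<forall>y. y \<noteq> \<sigma> \<and> dist y \<sigma> < \<eta> \<longrightarrow> dist ((f y - f \<sigma>) / (y - \<sigma>)) (f' \<sigma>) < e"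
        unfolding eventually_at by blast
      show ?thesis
      proof (intro exI[of _ \<eta>] conjI allI impI \<eta>(1))
        fix y assume y: "\<sigma> < y \<and> y \<le> b \<and> y < \<sigma> + \<eta>"
        then have "dist ((f y - f \<sigma>) / (y - \<sigma>)) (f' \<sigma>) < e" using \<eta>(2) by (auto simp: dist_real_def)
        then have "(f y - f \<sigma>) / (y - \<sigma>) < 1 + e" using gd(2) by (auto simp: dist_real_def)
        then have "f y - f \<sigma> < (1 + e) * (y - \<sigma>)" using y by (simp add: pos_divide_less_eq)
        moreover have "G \<sigma> \<le> G y" using G_mono y by auto
        ultimately show "P y" using P\<sigma> unfolding P_def by (simp add: algebra_simps)
      qed
    qed
    then obtain \<eta> where \<eta>: "\<eta> > 0" "\<forall>y. \<sigma> < y \<and> y \<le> b \<and> y < \<sigma> + \<eta> \<longrightarrow> P y" by blast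
    define x' where "x' = min b (\<sigma> + \<eta>/2)"
    have x'1: "\<sigma> < x'" using \<sigma>lt \<eta> x'_def by auto
    have "x' \<in> A"
      unfolding A_def
    proof (intro CollectI conjI allI impI)
      show "a \<le> x'" using x'1 \<sigma>1 by auto
      show "x' \<le> b" using x'_def by auto
      fix y assume y: "a \<le> y \<and> y \<le> x'"
      show "P y"
      proof (cases "y \<le> \<sigma>")
        case True then show ?thesis using \<sigma>A y A_def by auto
      next
        case False then show ?thesis using \<eta> y x'_def by auto
      qed
    qed
    then have "x' \<le> \<sigma>" unfolding \<sigma>_def by (rule cSup_upper[OF _ bddA])
    then show False using x'1 by auto
  qed
  have "P b" using P\<sigma> \<sigma>b by simp
  then show ?thesis using Ge[of b] unfolding P_def by auto
qed

lemma ac_half: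
  fixes f f' :: "real \<Rightarrow> real"
  assumes ac: "abs_cont_on a b f"
    and good: "\<And>x. x \<notin> N \<Longrightarrow> (f has_real_derivative f' x) (at x) \<and> f' x \<le> 1"
    and Nnull: "N \<in> null_sets lebesgue"
    and ab: "a \<le> b"
  shows "f b - f a \<le> b - a"
proof (rule field_le_epsilon)
  fix e :: real assume e: "e > 0"
  define e' where "e' = e / (b - a + 1)"
  have e': "e' > 0" using e ab by (simp add: e'_def)
  have "f b - f a \<le> (1 + e') * (b - a) + e'" by (rule ac_lip_eps[OF ac good Nnull ab e'])
  also have "\<dots> = (b - a) + e' * (b - a + 1)" by (simp add: algebra_simps)
  also have "e' * (b - a + 1) = e" using ab by (simp add: e'_def)
  finally show "f b - f a \<le> b - a + e" .
qed

lemma ac_lip: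
  fixes f f' :: "real \<Rightarrow> real"
  assumes ac: "\<forall>a b. abs_cont_on a b f"
    and ae: "AE x in lborel. (f has_real_derivative f' x) (at x) \<and> \<bar>f' x\<bar> \<le> 1"
  shows "\<bar>f y - f x\<bar> \<le> \<bar>y - x\<bar>"
proof -
  from ae obtain N where N: "{x \<in> space lborel. \<not> ((f has_real_derivative f' x) (at x) \<and> \<bar>f' x\<bar> \<le> 1)} \<subseteq> N"
    "emeasure lborel N = 0" "N \<in> sets lborel" by (rule AE_E)
  have Nnull: "N \<in> null_sets lebesgue" using N(2,3) by (intro null_sets_completionI null_setsI)
  have g: "(f has_real_derivative f' x) (at x) \<and> \<bar>f' x\<bar> \<le> 1" if "x \<notin> N" for x
    using N(1) that by auto
  have g1: "(f has_real_derivative f' x) (at x) \<and> f' x \<le> 1" if "x \<notin> N" for x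
    using g[OF that] by auto
  have g2: "((\<lambda>x. - f x) has_real_derivative - f' x) (at x) \<and> - f' x \<le> 1" if "x \<notin> N" for x
    using g[OF that] by (auto intro: DERIV_minus)
  have ac2: "abs_cont_on a b (\<lambda>x. - f x)" for a b
    using ac unfolding abs_cont_on_def by (simp add: abs_minus_commute)
  have both: "\<bar>f q - f p\<bar> \<le> q - p" if "p \<le> q" for p q
  proof -
    have "f q - f p \<le> q - p" using ac_half[OF _ g1 Nnull that] ac by blast
    moreover have "- f q - - f p \<le> q - p" using ac_half[OF ac2 g2 Nnull that] by blast
    ultimately show ?thesis by linarith
  qed
  show ?thesis
  proof (cases "x \<le> y")
    case True then show ?thesis using both[OF True] by simp
  next
    case False then show ?thesis using both[of y x] by (simp add: abs_minus_commute)
  qed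
qed



lemma gridI_mem:
  assumes n: "n \<ge> 1" and y: "y \<in> gridI n \<nu>"
  shows "- (real_of_int \<nu> * (pi / real n)) \<le> y" "y \<le> - ((real_of_int \<nu> - 1) * (pi / real n))"
  using y unfolding gridI_def gridpt_def by (auto simp: field_simps)

theorem lemma1:
  fixes r :: nat
  assumes "r \<ge> 2"
  shows "\<exists>c1 > 0. \<forall>(n::nat) (g::real \<Rightarrow> real) (j::int).
           n \<ge> 1 \<longrightarrow> classW (r - 1) g \<longrightarrow>
           (\<forall>\<nu>\<in>{j .. j + 2 * (int r - 2)}. \<exists>t\<in>gridI n \<nu>. \<bar>g t\<bar> \<le> (pi / real n) ^ (r - 1)) \<longrightarrow>
           (\<forall>x \<in> (\<Union>\<nu>\<in>{j .. j + 2 * (int r - 2)}. gridI n \<nu>).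
              \<bar>g x\<bar> \<le> c1 * (pi / real n) ^ (r - 1))"
proof -
  obtain k where rk: "r = k + 2" using assms le_Suc_ex by (metis add.commute)
  have ir: "int r - 2 = int k" using rk by simp
  have r1: "r - 1 = Suc k" using rk by simp
  have r11: "r - 1 - 1 = k" using rk by simp
  define c1 :: real where "c1 = 1 + real (k+1) * (2 * real k + 1)^k + (2 * real k + 1)^(k+1)"
  have c1pos: "c1 > 0" unfolding c1_def by (simp add: add_pos_nonneg)
  show ?thesis
  proof (intro exI[of _ c1] conjI c1pos allI impI ballI)
    fix n :: nat and g :: "real \<Rightarrow> real" and j :: int and x :: real
    assume n: "n \<ge> 1" and W: "classW (r - 1) g"
      and pts: "\<forall>\<nu>\<in>{j .. j + 2 * (int r - 2)}. \<exists>t\<in>gridI n \<nu>. \<bar>g t\<bar> \<le> (pi / real n) ^ (r - 1)"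
      and xU: "x \<in> (\<Union>\<nu>\<in>{j .. j + 2 * (int r - 2)}. gridI n \<nu>)"
    define h where "h = pi / real n"
    have hpos: "h > 0" using n by (simp add: h_def)
    obtain D where D0: "D 0 = g" and Dder: "\<forall>l < k. \<forall>x. (D l has_real_derivative D (Suc l) x) (at x)"
      and Dac: "\<forall>a b. abs_cont_on a b (D k)"
      and Dae: "AE x in lborel. (D k has_real_derivative D (Suc k) x) (at x) \<and> \<bar>D (Suc k) x\<bar> \<le> 1"
      using W unfolding classW_def r1 r11 by auto
    have lip: "\<forall>x y. \<bar>D k x - D k y\<bar> \<le> \<bar>x - y\<bar>"
      using ac_lip[OF Dac Dae] by (metis abs_minus_commute)
    obtain tt where tt: "\<forall>\<nu>\<in>{j .. j + 2 * int k}. tt \<nu> \<in> gridI n \<nu> \<and> \<bar>g (tt \<nu>)\<bar> \<le> h ^ (k+1)"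
      using pts unfolding ir h_def r1 by (metis Suc_eq_plus1)
    define s where "s i = tt (j + 2 * int i)" for i :: nat
    define J where "J = real_of_int j"
    have s_in: "s i \<in> gridI n (j + 2 * int i) \<and> \<bar>g (s i)\<bar> \<le> h ^ (k+1)" if "i \<le> k" for i
      using tt that unfolding s_def by auto
    have s_lo: "- ((J + 2 * real i) * h) \<le> s i" if "i \<le> k" for i
      using gridI_mem(1)[OF n conjunct1[OF s_in[OF that]]] by (simp add: J_def h_def)
    have s_hi: "s i \<le> - ((J + 2 * real i - 1) * h)" if "i \<le> k" for i
      using gridI_mem(2)[OF n conjunct1[OF s_in[OF that]]] by (simp add: J_def h_def)
    have lo_le: "- ((J + 2 * real k) * h) \<le> s i" if "i \<le> k" for i
    proof -
      have "(J + 2 * real i) * h \<le> (J + 2 * real k) * h" using that hpos by (intro mult_right_mono) auto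
      then show ?thesis using s_lo[OF that] by linarith
    qed
    have hi_le: "s i \<le> - ((J - 1) * h)" if "i \<le> k" for i
    proof -
      have "(J - 1) * h \<le> (J + 2 * real i - 1) * h" using hpos by (intro mult_right_mono) auto
      then show ?thesis using s_hi[OF that] by linarith
    qed
    obtain \<nu> where \<nu>: "\<nu> \<in> {j .. j + 2 * int k}" "x \<in> gridI n \<nu>" using xU unfolding ir by auto
    have x_lo: "- ((J + 2 * real k) * h) \<le> x"
    proof -
      have "real_of_int \<nu> \<le> J + 2 * real k" using \<nu>(1) unfolding J_def by simp
      then have "real_of_int \<nu> * h \<le> (J + 2 * real k) * h" using hpos by (intro mult_right_mono) auto
      then show ?thesis using gridI_mem(1)[OF n \<nu>(2)] by (simp add: h_def)
    qed
    have x_hi: "x \<le> - ((J - 1) * h)"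
    proof -
      have "J \<le> real_of_int \<nu>" using \<nu>(1) unfolding J_def by simp
      then have "(J - 1) * h \<le> (real_of_int \<nu> - 1) * h" using hpos by (intro mult_right_mono) auto
      then show ?thesis using gridI_mem(2)[OF n \<nu>(2)] by (simp add: h_def)
    qed
    define L where "L = (2 * real k + 1) * h"
    have width: "- ((J - 1) * h) - - ((J + 2 * real k) * h) = L" unfolding L_def by (simp add: algebra_simps)
    have near: "\<forall>i\<le>k. \<bar>x - s i\<bar> \<le> L"
      using lo_le hi_le x_lo x_hi width by (smt (verit))
    have sep1: "h \<le> s i - s i'" if "i < i'" "i' \<le> k" for i i'
    proof -
      have "(J + 2 * real i + 1) * h \<le> (J + 2 * real i' - 1) * h"
        using that hpos by (intro mult_right_mono) auto
      then show ?thesis using s_lo[of i] s_hi[of i'] that by (simp add: algebra_simps)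
    qed
    have sep: "\<forall>i\<le>k. \<forall>i'\<le>k. i \<noteq> i' \<longrightarrow> h \<le> \<bar>s i - s i'\<bar>"
    proof (intro allI impI)
      fix i i' assume "i \<le> k" "i' \<le> k" "i \<noteq> i'"
      then consider "i < i'" | "i' < i" by linarith
      then show "h \<le> \<bar>s i - s i'\<bar>"
      proof cases
        case 1 then show ?thesis using sep1 \<open>i' \<le> k\<close> by fastforce
      next
        case 2 then show ?thesis using sep1[of i' i] \<open>i \<le> k\<close> by simp
      qed
    qed
    have vals: "\<forall>i\<le>k. \<bar>D 0 (s i)\<bar> \<le> h ^ (k+1)" using s_in D0 by auto
    have "\<bar>D 0 x\<bar> \<le> h ^ (k+1) + real (k+1) * h ^ (k+1) * (L/h)^k + L^(k+1)"
      by (rule interp[OF Dder lip hpos sep near vals])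
    also have "\<dots> = c1 * h ^ (k+1)"
    proof -
      have e1: "L / h = 2 * real k + 1" using hpos unfolding L_def by simp
      have e2: "L ^ (k+1) = (2 * real k + 1)^(k+1) * h ^ (k+1)" unfolding L_def by (simp add: power_mult_distrib)
      show ?thesis unfolding e1 e2 c1_def by (simp add: algebra_simps)
    qed
    finally show "\<bar>g x\<bar> \<le> c1 * (pi / real n) ^ (r - 1)" using D0 r1 h_def by simp
  qed
qed

end
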